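(* The map $B\mapsto I(B)$, sending a bridge (a nondecreasing càdlàg function $[0,1]\to[0,1]$ of the bridge form) to its interval-partition, is continuous when bridges are endowed with the Skorohod topology and interval-partitions with the Hausdorff distance between complements $d_H$.
   Context: A bridge is a function $B:[0,1]\to[0,1]$ of the form $B(x)=x(1-\sum_i\beta_i)+\sum_i\beta_i\mathbf 1_{\{v_i\le x\}}$ with $\beta_1\ge\beta_2\ge\dots\ge0$, $\sum\beta_i\le1$, and $v_i\in[0,1]$. $I(B)=\operatorname{int}([0,1]\setminus B([0,1]))$, where $B([0,1])$ is the range of $B$. For open subsets $I,\tilde I$ of $(0,1)$, $d_H(I,\tilde I)=\sup_{x\notin I}d(x,[0,1]\setminus\tilde I)\vee\sup_{x\notin\tilde I}d(x,[0,1]\setminus I)$ (complements taken in $[0,1]$). *)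

theory Defs
  imports "HOL-Analysis.Analysis"
begin

text \<open>Finitely many jumps are encoded by beta_i = 0 eventually.\<close>
definition bridge :: "(real \<Rightarrow> real) \<Rightarrow> bool" where
  "bridge B \<longleftrightarrow> (\<exists>(\<beta>::nat \<Rightarrow> real) (v::nat \<Rightarrow> real).
      antimono \<beta> \<and> (\<forall>i. 0 \<le> \<beta> i) \<and> summable \<beta> \<and> suminf \<beta> \<le> 1 \<and>
      (\<forall>i. v i \<in> {0..1}) \<and>
      (\<forall>x\<in>{0..1}. B x = x * (1 - suminf \<beta>) + (\<Sum>i. \<beta> i * (if v i \<le> x then 1 else 0))))"

definition IB :: "(real \<Rightarrow> real) \<Rightarrow> real set" where
  "IB B = interior ({0..1} - B ` {0..1})"

definition dH :: "real set \<Rightarrow> real set \<Rightarrow> real" where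
  "dH I J = max (SUP x\<in>{0..1} - I. infdist x ({0..1} - J))
                (SUP x\<in>{0..1} - J. infdist x ({0..1} - I))"

definition time_changes :: "(real \<Rightarrow> real) set" where
  "time_changes = {l. strict_mono_on {0..1} l \<and> continuous_on {0..1} l \<and> l ` {0..1} = {0..1}}"

definition skorohod_dist :: "(real \<Rightarrow> real) \<Rightarrow> (real \<Rightarrow> real) \<Rightarrow> real" where
  "skorohod_dist f g = Inf ((\<lambda>l. max (SUP t\<in>{0..1}. \<bar>l t - t\<bar>)
                                       (SUP t\<in>{0..1}. \<bar>f t - g (l t)\<bar>)) ` time_changes)"

end

theory Submission
  imports Defs
begin

lemma bridge_bounds:
  assumes "bridge B" "x \<in> {0..1}"
  shows "0 \<le> B x \<and> B x \<le> 1"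
proof -
  obtain \<beta> v where b: "antimono \<beta>" "\<forall>i. 0 \<le> \<beta> i" "summable \<beta>" "suminf \<beta> \<le> 1"
    and Bx: "\<forall>x\<in>{0..1}. B x = x * (1 - suminf \<beta>) + (\<Sum>i. \<beta> i * (if v i \<le> x then 1 else 0))"
    using assms(1) unfolding bridge_def by blast
  let ?g = "\<lambda>i. \<beta> i * (if v i \<le> x then 1 else (0::real))"
  have gn: "\<And>i. 0 \<le> ?g i" using b(2) by simp
  have gl: "\<And>i. ?g i \<le> \<beta> i" using b(2) by simp
  have sg: "summable ?g"
    by (rule summable_comparison_test[OF _ b(3)]) (use gn gl in auto)
  have s0: "0 \<le> suminf ?g" using sg gn by (simp add: suminf_nonneg)
  have s1: "suminf ?g \<le> suminf \<beta>" by (rule suminf_le[OF gl sg b(3)])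
  have x: "0 \<le> x" "x \<le> 1" using assms(2) by auto
  have "0 \<le> x * (1 - suminf \<beta>)" using x b(4) by simp
  moreover have "x * (1 - suminf \<beta>) \<le> 1 - suminf \<beta>" using x b(4)
    by (simp add: mult_left_le_one_le)
  ultimately show ?thesis using Bx assms(2) s0 s1 by auto
qed

lemma gap_lemma:
  fixes R R' :: "real set"
  assumes R': "R' \<subseteq> {0..1}" and x: "x \<in> {0..1} - interior ({0..1} - R)"
    and cl: "\<forall>y\<in>R. \<exists>y'\<in>R'. dist y y' \<le> d" and d: "0 \<le> d"
  shows "infdist x ({0..1} - interior ({0..1} - R')) \<le> d"
proof -
  let ?C = "{0..1} - interior ({0..1} - R')"
  have intsub: "interior ({0..1} - R') \<subseteq> {0<..<1}"
    using interior_mono[of "{0..1} - R'" "{0..1::real}"] by auto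
  have RC: "R' \<subseteq> ?C" using R' interior_subset[of "{0..1} - R'"] by auto
  show ?thesis
  proof (cases "x = 0 \<or> x = 1")
    case True
    then have "x \<in> ?C" using intsub by auto
    then show ?thesis using d by (simp add: infdist_zero)
  next
    case False
    then have x01: "0 < x" "x < 1" using x by auto
    have "infdist x ?C \<le> d + e" if e: "e > 0" for e
    proof -
      have "\<exists>y\<in>R. dist x y < e"
      proof (rule ccontr)
        assume "\<not> ?thesis"
        then have n: "\<forall>y\<in>R. e \<le> dist x y" by auto
        let ?r = "min e (min x (1 - x))"
        have "ball x ?r \<subseteq> {0..1} - R"
        proof
          fix z assume z: "z \<in> ball x ?r"
          then have "dist x z < e" "dist x z < x" "dist x z < 1 - x" by auto
          then show "z \<in> {0..1} - R" using n by (auto simp: dist_real_def)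
        qed
        then have "x \<in> interior ({0..1} - R)"
          using x01 e by (intro interiorI[of "ball x ?r"]) auto
        then show False using x by auto
      qed
      then obtain y where y: "y \<in> R" "dist x y < e" by auto
      then obtain y' where y': "y' \<in> R'" "dist y y' \<le> d" using cl by auto
      have "infdist x ?C \<le> dist x y'" using y'(1) RC by (intro infdist_le) auto
      also have "\<dots> \<le> dist x y + dist y y'" by (rule dist_triangle)
      finally show ?thesis using y y' by linarith
    qed
    then show ?thesis using field_le_epsilon by (metis add.commute)
  qed
qed

theorem mainTheorem14:
  assumes "bridge B"
  shows "\<forall>\<epsilon>>0. \<exists>\<delta>>0. \<forall>B'. bridge B' \<and> skorohod_dist B B' < \<delta> \<longrightarrow> dH (IB B) (IB B') < \<epsilon>"
proof (intro allI impI)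
  fix \<epsilon> :: real assume e: "\<epsilon> > 0"
  show "\<exists>\<delta>>0. \<forall>B'. bridge B' \<and> skorohod_dist B B' < \<delta> \<longrightarrow> dH (IB B) (IB B') < \<epsilon>"
  proof (intro exI[of _ \<epsilon>] conjI allI impI e)
    fix B' assume a: "bridge B' \<and> skorohod_dist B B' < \<epsilon>"
    let ?F = "\<lambda>l. max (SUP t\<in>{0..1}. \<bar>l t - t\<bar>) (SUP t\<in>{0..1}. \<bar>B t - B' (l t)\<bar>)"
    have idt: "(\<lambda>x. x) \<in> time_changes"
      unfolding time_changes_def by (auto simp: strict_mono_on_def)
    have "Inf (?F ` time_changes) < \<epsilon>" using a unfolding skorohod_dist_def by simp
    then obtain l where l: "l \<in> time_changes" "?F l < \<epsilon>"
      using cInf_lessD[of "?F ` time_changes" \<epsilon>] idt by blast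
    have lim: "l ` {0..1} = {0..1}" using l(1) unfolding time_changes_def by auto
    define d where "d = (SUP t\<in>{0..1}. \<bar>B t - B' (l t)\<bar>)"
    have dlt: "d < \<epsilon>" using l(2) unfolding d_def by linarith
    have bnd: "\<bar>B t - B' (l t)\<bar> \<le> 1" if "t \<in> {0..1}" for t
    proof -
      have "l t \<in> {0..1}" using lim that by auto
      then show ?thesis using bridge_bounds[OF assms that] bridge_bounds[of B' "l t"] a by auto
    qed
    have dle: "\<bar>B t - B' (l t)\<bar> \<le> d" if "t \<in> {0..1}" for t
      unfolding d_def by (rule cSUP_upper[OF that]) (use bnd in \<open>auto intro!: bdd_aboveI2[where M=1]\<close>)
    have d0: "0 \<le> d" using dle[of 0] by auto
    have RB: "B ` {0..1} \<subseteq> {0..1}" using bridge_bounds[OF assms] by auto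
    have RB': "B' ` {0..1} \<subseteq> {0..1}" using bridge_bounds[of B'] a by auto
    have c1: "\<forall>y\<in>B ` {0..1}. \<exists>y'\<in>B' ` {0..1}. dist y y' \<le> d"
    proof
      fix y assume "y \<in> B ` {0..1}"
      then obtain t where t: "t \<in> {0..1}" "y = B t" by auto
      have "l t \<in> {0..1}" using lim t by auto
      then show "\<exists>y'\<in>B' ` {0..1}. dist y y' \<le> d"
        using dle[OF t(1)] t by (auto simp: dist_real_def)
    qed
    have c2: "\<forall>y\<in>B' ` {0..1}. \<exists>y'\<in>B ` {0..1}. dist y y' \<le> d"
    proof
      fix y assume "y \<in> B' ` {0..1}"
      then obtain s where s: "s \<in> {0..1}" "y = B' s" by auto
      moreover have "s \<in> l ` {0..1}" using lim s(1) by simp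
      ultimately obtain t where t: "t \<in> {0..1}" "s = l t" by blast
      then show "\<exists>y'\<in>B ` {0..1}. dist y y' \<le> d"
        using dle[OF t(1)] s by (auto simp: dist_real_def abs_minus_commute)
    qed
    have ne: "\<And>R::real set. 0 \<in> {0..1} - interior ({0..1} - R)"
    proof -
      fix R :: "real set"
      have "interior ({0..1} - R) \<subseteq> {0<..<1}"
        using interior_mono[of "{0..1} - R" "{0..1::real}"] by auto
      then show "0 \<in> {0..1} - interior ({0..1} - R)" by auto
    qed
    have s1: "(SUP x\<in>{0..1} - IB B. infdist x ({0..1} - IB B')) \<le> d"
      unfolding IB_def
      by (rule cSUP_least) (use ne[of "B ` {0..1}"] gap_lemma[OF RB' _ c1 d0] in blast)+
    have s2: "(SUP x\<in>{0..1} - IB B'. infdist x ({0..1} - IB B)) \<le> d"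
      unfolding IB_def
      by (rule cSUP_least) (use ne[of "B' ` {0..1}"] gap_lemma[OF RB _ c2 d0] in blast)+
    show "dH (IB B) (IB B') < \<epsilon>" unfolding dH_def using s1 s2 dlt by simp
  qed
qed

end
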